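(* Let $r\geq 2$ be an integer, and let $x_i$ ($1\le i\le r$) and $y_{i,j}$ ($1\le i\le j\le r$) be formal variables. Define \[ L(x,y)=\sum_{T\in\mathcal{U}_r}\prod_{v=2}^r\Big(x_{f_T(v)}\sum_{u\in \mathfrak{h}_T(v)} y_{v,u}\Big),\qquad R(x,y)=x_1\,y_{r,r}\prod_{i=2}^{r-1}\Bigg(\sum_{j=1}^{i} x_j\,y_{i,i}+\sum_{j=i+1}^{r} x_i\,y_{i,j}\Bigg). \] Then \[ \text{(a)}\quad y_{1,1}\,L(x,y)=\sum_{\pi\in\Pi_1(\{1,\dots,r\})} D(\pi)\sum_{T\in\mathcal{E}(\pi)}\kappa(T), \] \[ \text{(b)}\quad y_{1,1}\,R(x,y)=\sum_{\pi\in\Pi_1(\{1,\dots,r\})} D(\pi)\sum_{c\in\mathcal{C}(\pi)}\omega(c,\pi). \]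
   Context: Rooted trees have edges oriented towards the root; the head of an edge is the father of its tail (son); $f_T(v)$ is the father of a non-root vertex $v$. Descendants of a vertex are its sons and recursively their descendants; $u$ is a descendant of $v$ iff $v$ is an ancestor of $u$. An unordered increasing tree on a finite set $\mathcal{S}$ of positive integers is a rooted tree with vertex-set $\mathcal{S}$, sons unordered, such that every son has a larger label than its father. $\mathcal{U}_r$ is the set of unordered increasing trees on $\{1,\dots,r\}$. The hook $\mathfrak{h}_T(v)$ is $v$ together with its descendants. For an unordered increasing tree $T$, $\sigma_i(T)$ is the number of sons of $i$ and $\kappa(T)=\prod_{i\in V(T)}x_i^{\sigma_i(T)}$. $\Pi_1(\{1,\dots,r\})$ is the set of set partitions $\pi$ of $\{1,\dots,r\}$ having $\{1\}$ as a block. If $\pi$ has $k$ blocks, they are indexed $\pi_1,\dots,\pi_k$ so that their maxima $\mu_i=\max\pi_i$ satisfy $\mu_1<\dots<\mu_k$ (so $\pi_1=\{1\}$, $\mu_1=1$, $\mu_k=r$). A function $g:\mathcal{S}\to\mathcal{S}$ is dominating if $g(i)\ge i$ for all $i$; its weight is $\mathrm{wt}_g=\prod_{i\in\mathcal{S}}y_{i,g(i)}$. Its induced partition is the partition of $\mathcal{S}$ into the vertex-sets of the connected components (ignoring orientation) of the digraph with edges $(i,g(i))$. $\mathcal{D}(\pi)$ is the set of dominating functions on $\{1,\dots,r\}$ with induced partition $\pi$, and $D(\pi)=\sum_{g\in\mathcal{D}(\pi)}\mathrm{wt}_g$. $\mathcal{E}(\pi)$ is the set of unordered increasing trees on $\{1,\dots,r\}$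 such that for every two elements $i<j$ in the same block of $\pi$, $i$ is an ancestor of $j$. $\mathcal{C}(\pi)=\{(c_2,\dots,c_{k-1}):1\le c_i\le\mu_i\}$ (containing only the empty list if $k=2$), and for $c\in\mathcal{C}(\pi)$, \[ \omega(c,\pi)=\frac{x_{c_2}\cdots x_{c_{k-1}}}{x_{\mu_2}\cdots x_{\mu_k}}\prod_{i=1}^r x_i. \] *)

theory Defs
  imports Main "HOL-Library.Disjoint_Sets" "HOL-Library.FuncSet"
begin

(* An unordered increasing tree on {1..r} is represented by its father map:
   T v = f_T(v) for the non-root vertices v in {2..r} (the root is 1, the
   smallest label); increasing means f_T(v) < v. *)
definition incr_trees :: "nat \<Rightarrow> (nat \<Rightarrow> nat) set" where
  "incr_trees r = Pi\<^sub>E {2..r} (\<lambda>v. {1..<v})"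

inductive is_desc :: "nat \<Rightarrow> (nat \<Rightarrow> nat) \<Rightarrow> nat \<Rightarrow> nat \<Rightarrow> bool"
  for r T where
  son: "2 \<le> u \<Longrightarrow> u \<le> r \<Longrightarrow> T u = v \<Longrightarrow> is_desc r T u v"
| step: "2 \<le> u \<Longrightarrow> u \<le> r \<Longrightarrow> is_desc r T (T u) v \<Longrightarrow> is_desc r T u v"

definition hook :: "nat \<Rightarrow> (nat \<Rightarrow> nat) \<Rightarrow> nat \<Rightarrow> nat set" where
  "hook r T v = insert v {u \<in> {1..r}. is_desc r T u v}"

definition nsons :: "nat \<Rightarrow> (nat \<Rightarrow> nat) \<Rightarrow> nat \<Rightarrow> nat" where
  "nsons r T i = card {v \<in> {2..r}. T v = i}"

definition kappa :: "nat \<Rightarrow> (nat \<Rightarrow> 'a::comm_ring_1) \<Rightarrow> (nat \<Rightarrow> nat) \<Rightarrow> 'a" where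
  "kappa r x T = (\<Prod>i\<in>{1..r}. x i ^ nsons r T i)"

definition Lpoly :: "nat \<Rightarrow> (nat \<Rightarrow> 'a::comm_ring_1) \<Rightarrow> (nat \<Rightarrow> nat \<Rightarrow> 'a) \<Rightarrow> 'a" where
  "Lpoly r x y = (\<Sum>T\<in>incr_trees r. \<Prod>v\<in>{2..r}. x (T v) * (\<Sum>u\<in>hook r T v. y v u))"

definition Rpoly :: "nat \<Rightarrow> (nat \<Rightarrow> 'a::comm_ring_1) \<Rightarrow> (nat \<Rightarrow> nat \<Rightarrow> 'a) \<Rightarrow> 'a" where
  "Rpoly r x y = x 1 * y r r *
     (\<Prod>i\<in>{2..r-1}. (\<Sum>j\<in>{1..i}. x j * y i i) + (\<Sum>j\<in>{i+1..r}. x i * y i j))"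

definition Pi1 :: "nat \<Rightarrow> nat set set set" where
  "Pi1 r = {P. partition_on {1..r} P \<and> {1} \<in> P}"

(* mu P i = maximum of the i-th block (1-indexed, blocks ordered by maxima) *)
definition mu :: "nat set set \<Rightarrow> nat \<Rightarrow> nat" where
  "mu P i = sorted_list_of_set (Max ` P) ! (i - 1)"

definition dom_funs :: "nat \<Rightarrow> (nat \<Rightarrow> nat) set" where
  "dom_funs r = Pi\<^sub>E {1..r} (\<lambda>i. {i..r})"

definition wt :: "nat \<Rightarrow> (nat \<Rightarrow> nat \<Rightarrow> 'a::comm_ring_1) \<Rightarrow> (nat \<Rightarrow> nat) \<Rightarrow> 'a" where
  "wt r y g = (\<Prod>i\<in>{1..r}. y i (g i))"

definition induced_partition :: "nat \<Rightarrow> (nat \<Rightarrow> nat) \<Rightarrow> nat set set" where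
  "induced_partition r g =
     (let E = {(i, g i) | i. i \<in> {1..r}} in {1..r} // ((E \<union> E\<inverse>)\<^sup>*))"

definition Dsum :: "nat \<Rightarrow> (nat \<Rightarrow> nat \<Rightarrow> 'a::comm_ring_1) \<Rightarrow> nat set set \<Rightarrow> 'a" where
  "Dsum r y P = (\<Sum>g\<in>{g \<in> dom_funs r. induced_partition r g = P}. wt r y g)"

definition Etrees :: "nat \<Rightarrow> nat set set \<Rightarrow> (nat \<Rightarrow> nat) set" where
  "Etrees r P = {T \<in> incr_trees r.
      \<forall>B\<in>P. \<forall>i\<in>B. \<forall>j\<in>B. i < j \<longrightarrow> is_desc r T j i}"

(* C(pi): lists (c_2,...,c_{k-1}) with 1 <= c_i <= mu_i, as functions on {2..k-1} *)
definition Clists :: "nat set set \<Rightarrow> (nat \<Rightarrow> nat) set" where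
  "Clists P = Pi\<^sub>E {2..card P - 1} (\<lambda>i. {1..mu P i})"

(* omega(c,pi) = x_{c_2}...x_{c_{k-1}} / (x_{mu_2}...x_{mu_k}) * prod_{i=1}^r x_i,
   written as the monomial it is (the mu_i are distinct elements of {1..r}) *)
definition omega :: "nat \<Rightarrow> (nat \<Rightarrow> 'a::comm_ring_1) \<Rightarrow> (nat \<Rightarrow> nat) \<Rightarrow> nat set set \<Rightarrow> 'a" where
  "omega r x c P = (\<Prod>i\<in>{2..card P - 1}. x (c i)) *
      (\<Prod>i\<in>{1..r} - mu P ` {2..card P}. x i)"

end

theory Submission
  imports Defs
begin


definition rt :: "nat \<Rightarrow> (nat \<Rightarrow> nat) \<Rightarrow> nat \<Rightarrow> nat" where "rt r g i = (g ^^ r) i"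
definition cls :: "nat \<Rightarrow> (nat \<Rightarrow> nat) \<Rightarrow> nat \<Rightarrow> nat set" where
  "cls r g m = {b\<in>{1..r}. rt r g b = m}"

definition EE :: "nat \<Rightarrow> (nat \<Rightarrow> nat) \<Rightarrow> (nat \<times> nat) set" where "EE r g = {(i, g i) | i. i \<in> {1..r}}"
definition Fx :: "nat \<Rightarrow> (nat \<Rightarrow> nat) \<Rightarrow> nat set" where "Fx r g = {m\<in>{1..r}. g m = m}"

lemma Fx_iff: "m \<in> Fx r g \<longleftrightarrow> m \<in> {1..r} \<and> g m = m"
  by (simp add: Fx_def)

context fixes r g assumes gd: "g \<in> dom_funs r" begin

lemma gin: "i \<in> {1..r} \<Longrightarrow> g i \<in> {i..r}"
  using gd by (auto simp: dom_funs_def PiE_def Pi_def)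

lemma iter_in: "i \<in> {1..r} \<Longrightarrow> (g^^n) i \<in> {i..r}"
proof (induction n)
  case 0 then show ?case by auto
next
  case (Suc n)
  then have "(g^^n) i \<in> {1..r}" by auto
  from gin[OF this] Suc show ?case by auto
qed

lemma iter_fix_or: "i \<in> {1..r} \<Longrightarrow> g ((g^^n) i) = (g^^n) i \<or> (g^^n) i \<ge> i + n"
proof (induction n)
  case 0 then show ?case by auto
next
  case (Suc n)
  have w: "(g^^n) i \<in> {1..r}" using iter_in[OF Suc.prems, of n] Suc.prems by auto
  show ?case
  proof (cases "g ((g^^n) i) = (g^^n) i")
    case True then show ?thesis by simp
  next
    case False
    with Suc have "(g^^n) i \<ge> i + n" by auto
    moreover have "g ((g^^n) i) \<ge> (g^^n) i" using gin[OF w] by auto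
    ultimately show ?thesis using False by auto
  qed
qed

lemma rt_fix: "i \<in> {1..r} \<Longrightarrow> g (rt r g i) = rt r g i"
  using iter_fix_or[of i r] iter_in[of i r] unfolding rt_def by auto

lemma rt_in: "i \<in> {1..r} \<Longrightarrow> rt r g i \<in> {i..r}"
  using iter_in unfolding rt_def by auto

lemma fix_pow: "g m = m \<Longrightarrow> (g^^n) m = m"
  by (induction n) auto

lemma rt_fixpt: "g m = m \<Longrightarrow> rt r g m = m"
  unfolding rt_def by (rule fix_pow)

lemma rt_g: "i \<in> {1..r} \<Longrightarrow> rt r g (g i) = rt r g i"
  using rt_fix[of i] unfolding rt_def by (simp add: funpow_swap1)


lemma E_path: "i \<in> {1..r} \<Longrightarrow> (i, (g^^n) i) \<in> (EE r g)\<^sup>*"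
proof (induction n)
  case 0 then show ?case by auto
next
  case (Suc n)
  have w: "(g^^n) i \<in> {1..r}" using iter_in[OF Suc.prems, of n] Suc.prems by auto
  then have "((g^^n) i, g ((g^^n) i)) \<in> (EE r g)" unfolding EE_def by auto
  with Suc show ?case by auto
qed

lemma R_root: "(a,b) \<in> ((EE r g) \<union> (EE r g)\<inverse>)\<^sup>* \<Longrightarrow> a \<in> {1..r} \<Longrightarrow> b \<in> {1..r} \<and> rt r g b = rt r g a"
proof (induction rule: rtrancl_induct)
  case base then show ?case by auto
next
  case (step b c)
  then have b: "b \<in> {1..r}" "rt r g b = rt r g a" by auto
  from step(2) show ?case
  proof
    assume "(b,c) \<in> (EE r g)"
    then have "c = g b" unfolding EE_def by auto
    with gin[OF b(1)] rt_g[OF b(1)] b show ?thesis by auto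
  next
    assume "(b,c) \<in> (EE r g)\<inverse>"
    then have "b = g c" "c \<in> {1..r}" unfolding EE_def by auto
    with rt_g[of c] b show ?thesis by auto
  qed
qed

lemma R_sym_path: "(a,b) \<in> (EE r g)\<^sup>* \<Longrightarrow> (a,b) \<in> ((EE r g) \<union> (EE r g)\<inverse>)\<^sup>* \<and> (b,a) \<in> ((EE r g) \<union> (EE r g)\<inverse>)\<^sup>*"
proof -
  assume h: "(a,b) \<in> (EE r g)\<^sup>*"
  have 1: "(a,b) \<in> ((EE r g) \<union> (EE r g)\<inverse>)\<^sup>*" using h rtrancl_mono[of "EE r g" "(EE r g) \<union> (EE r g)\<inverse>"] by auto
  have "(b,a) \<in> ((EE r g)\<inverse>)\<^sup>*" using h by (simp add: rtrancl_converse)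
  then have "(b,a) \<in> ((EE r g) \<union> (EE r g)\<inverse>)\<^sup>*" using rtrancl_mono[of "(EE r g)\<inverse>" "(EE r g) \<union> (EE r g)\<inverse>"] by auto
  with 1 show ?thesis by auto
qed

lemma Img: "a \<in> {1..r} \<Longrightarrow> ((EE r g) \<union> (EE r g)\<inverse>)\<^sup>* `` {a} = cls r g (rt r g a)"
proof (intro equalityI subsetI)
  fix b assume "a \<in> {1..r}" "b \<in> ((EE r g) \<union> (EE r g)\<inverse>)\<^sup>* `` {a}"
  then show "b \<in> cls r g (rt r g a)" using R_root unfolding cls_def by auto
next
  fix b assume a: "a \<in> {1..r}" and "b \<in> cls r g (rt r g a)"
  then have b: "b \<in> {1..r}" "rt r g b = rt r g a" unfolding cls_def by auto
  have "(a, rt r g a) \<in> ((EE r g) \<union> (EE r g)\<inverse>)\<^sup>*" using R_sym_path[OF E_path[OF a, of r]] unfolding rt_def by auto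
  moreover have "(rt r g a, b) \<in> ((EE r g) \<union> (EE r g)\<inverse>)\<^sup>*" using R_sym_path[OF E_path[OF b(1), of r]] b(2) unfolding rt_def by auto
  ultimately show "b \<in> ((EE r g) \<union> (EE r g)\<inverse>)\<^sup>* `` {a}" by (auto intro: rtrancl_trans)
qed


lemma ip_eq: "induced_partition r g = cls r g ` (Fx r g)"
proof -
  have "induced_partition r g = {1..r} // (((EE r g) \<union> (EE r g)\<inverse>)\<^sup>*)"
    unfolding induced_partition_def EE_def Let_def by (rule refl)
  also have "\<dots> = (\<lambda>a. ((EE r g) \<union> (EE r g)\<inverse>)\<^sup>* `` {a}) ` {1..r}"
    unfolding quotient_def by blast
  also have "\<dots> = (\<lambda>a. cls r g (rt r g a)) ` {1..r}"
    by (rule image_cong[OF refl]) (rule Img)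
  also have "\<dots> = cls r g ` (Fx r g)"
  proof (intro equalityI subsetI)
    fix B assume "B \<in> (\<lambda>a. cls r g (rt r g a)) ` {1..r}"
    then obtain a where a: "a \<in> {1..r}" "B = cls r g (rt r g a)" by blast
    have "rt r g a \<in> (Fx r g)" using rt_in[OF a(1)] rt_fix[OF a(1)] a(1) by (simp add: Fx_iff)
    with a show "B \<in> cls r g ` (Fx r g)" by blast
  next
    fix B assume "B \<in> cls r g ` (Fx r g)"
    then obtain m where m: "m \<in> (Fx r g)" "B = cls r g m" by blast
    then have "m \<in> {1..r}" "rt r g m = m" using rt_fixpt[of m] by (simp_all add: Fx_iff)
    then have "B = (\<lambda>a. cls r g (rt r g a)) m" using m by simp
    then show "B \<in> (\<lambda>a. cls r g (rt r g a)) ` {1..r}" using \<open>m \<in> {1..r}\<close> by (rule image_eqI)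
  qed
  finally show ?thesis .
qed

lemma cls_mem: "m \<in> (Fx r g) \<Longrightarrow> m \<in> cls r g m"
  using rt_fixpt[of m] unfolding Fx_iff cls_def by simp

lemma cls_le: "b \<in> cls r g m \<Longrightarrow> b \<le> m"
proof -
  assume "b \<in> cls r g m"
  then have "b \<in> {1..r}" "rt r g b = m" unfolding cls_def by simp_all
  with rt_in[of b] show "b \<le> m" by simp
qed

lemma cls_fin: "finite (cls r g m)"
  unfolding cls_def by simp

lemma cls_Max: "m \<in> (Fx r g) \<Longrightarrow> Max (cls r g m) = m"
  by (rule Max_eqI[OF cls_fin cls_le cls_mem])

lemma cls_inj: "inj_on (cls r g) (Fx r g)"
proof (rule inj_onI)
  fix a b assume ab: "a \<in> Fx r g" "b \<in> Fx r g" "cls r g a = cls r g b"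
  have "a = Max (cls r g a)" by (rule sym, rule cls_Max[OF ab(1)])
  also have "\<dots> = Max (cls r g b)" using ab(3) by (rule arg_cong)
  also have "\<dots> = b" by (rule cls_Max[OF ab(2)])
  finally show "a = b" .
qed

lemma ip_partition: "partition_on {1..r} (cls r g ` (Fx r g))"
  unfolding partition_on_def
proof (intro conjI)
  show "\<Union> (cls r g ` (Fx r g)) = {1..r}"
  proof (intro equalityI subsetI)
    fix b assume "b \<in> \<Union> (cls r g ` (Fx r g))" then show "b \<in> {1..r}" unfolding cls_def by auto
  next
    fix b assume b: "b \<in> {1..r}"
    have "rt r g b \<in> (Fx r g)" using b rt_in[OF b] rt_fix[OF b] unfolding Fx_def by auto
    moreover have "b \<in> cls r g (rt r g b)" using b unfolding cls_def by auto
    ultimately show "b \<in> \<Union> (cls r g ` (Fx r g))" by auto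
  qed
  show "disjoint (cls r g ` (Fx r g))"
  proof (rule pairwise_imageI)
    fix m1 m2 assume "m1 \<in> (Fx r g)" "m2 \<in> (Fx r g)" "m1 \<noteq> m2" "cls r g m1 \<noteq> cls r g m2"
    then show "disjnt (cls r g m1) (cls r g m2)" unfolding disjnt_def cls_def by blast
  qed
  show "{} \<notin> cls r g ` (Fx r g)" using cls_mem by auto
qed

lemma ip_Pi1: assumes r1: "r \<ge> 1" shows "induced_partition r g \<in> Pi1 r \<longleftrightarrow> g 1 = 1"
proof (rule iffI)
  assume "induced_partition r g \<in> Pi1 r"
  then have "{1} \<in> cls r g ` (Fx r g)" unfolding Pi1_def ip_eq by auto
  then obtain m where m: "m \<in> (Fx r g)" "{1} = cls r g m" by auto
  then have "m = 1" using cls_mem by auto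
  with m show "g 1 = 1" unfolding Fx_def by auto
next
  assume g1: "g 1 = 1"
  have "cls r g 1 = {1}"
  proof (intro equalityI subsetI)
    fix b assume "b \<in> cls r g 1" then show "b \<in> {1}" using rt_in[of b] unfolding cls_def by force
  next
    fix b :: nat assume "b \<in> {1}" then show "b \<in> cls r g 1" using rt_fixpt[OF g1] r1 unfolding cls_def by auto
  qed
  moreover have "1 \<in> (Fx r g)" using g1 r1 unfolding Fx_def by auto
  ultimately have "{1} \<in> cls r g ` (Fx r g)" by (metis image_eqI)
  then show "induced_partition r g \<in> Pi1 r" unfolding Pi1_def ip_eq using ip_partition by simp
qed

end



context fixes r T assumes Ti: "T \<in> incr_trees r" begin

lemma Tin: "v \<in> {2..r} \<Longrightarrow> T v \<in> {1..<v}"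
  using Ti by (auto simp: incr_trees_def PiE_def Pi_def)

lemma desc_less: "is_desc r T u v \<Longrightarrow> v < u \<and> 1 \<le> v \<and> u \<in> {2..r}"
proof (induction rule: is_desc.induct)
  case (son u v) then show ?case using Tin[of u] by auto
next
  case (step u v) then show ?case using Tin[of u] by auto
qed

lemma desc_trans: "is_desc r T a b \<Longrightarrow> is_desc r T b c \<Longrightarrow> is_desc r T a c"
proof (induction rule: is_desc.induct)
  case (son u v) then show ?case by (auto intro: is_desc.step)
next
  case (step u v) then show ?case by (auto intro: is_desc.step)
qed

lemma desc_inv: "is_desc r T u j \<Longrightarrow> j = T u \<or> is_desc r T (T u) j"
  by (cases rule: is_desc.cases) auto

lemma chain: "is_desc r T u i \<Longrightarrow> (j = u \<or> is_desc r T u j) \<Longrightarrow> i < j \<Longrightarrow> is_desc r T j i"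
proof (induction arbitrary: j rule: is_desc.induct)
  case (son u v)
  from son.prems(1) show ?case
  proof
    assume "j = u" then show ?thesis using son by (auto intro: is_desc.son)
  next
    assume d: "is_desc r T u j"
    from desc_inv[OF d] show ?thesis
    proof
      assume "j = T u" then show ?thesis using son by auto
    next
      assume "is_desc r T (T u) j" then have "j < T u" using desc_less by auto
      then show ?thesis using son by auto
    qed
  qed
next
  case (step u v)
  from step.prems(1) show ?case
  proof
    assume "j = u" then show ?thesis using step by (auto intro: is_desc.step)
  next
    assume d: "is_desc r T u j"
    from desc_inv[OF d] have "j = T u \<or> is_desc r T (T u) j" .
    then show ?thesis using step.IH step.prems(2) by auto
  qed
qed

lemma hook_sub: "v \<in> {2..r} \<Longrightarrow> hook r T v \<subseteq> {v..r}"
  unfolding hook_def using desc_less by fastforce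

lemma kappa_eq: "(\<Prod>v\<in>{2..r}. x (T v)) = kappa r x T"
proof -
  have "(\<Prod>v\<in>{2..r}. x (T v)) = (\<Prod>i\<in>{1..r}. \<Prod>v\<in>{v \<in> {2..r}. T v = i}. x (T v))"
    by (rule prod.group[symmetric]) (use Tin in force)+
  also have "\<dots> = (\<Prod>i\<in>{1..r}. x i ^ nsons r T i)"
    unfolding nsons_def by (intro prod.cong refl) simp
  finally show ?thesis unfolding kappa_def .
qed

end

lemma E_iff:
  assumes gd: "g \<in> dom_funs r" and g1: "g 1 = 1" and Ti: "T \<in> incr_trees r"
  shows "(\<forall>v\<in>{2..r}. g v \<in> hook r T v) \<longleftrightarrow> T \<in> Etrees r (induced_partition r g)"
proof -
  have "T \<in> Etrees r (induced_partition r g) \<longleftrightarrow>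
        (\<forall>B\<in>cls r g ` Fx r g. \<forall>i\<in>B. \<forall>j\<in>B. i < j \<longrightarrow> is_desc r T j i)"
    unfolding Etrees_def ip_eq[OF gd] using Ti by auto
  also have "\<dots> \<longleftrightarrow> (\<forall>v\<in>{2..r}. g v \<in> hook r T v)"
  proof
    assume H: "\<forall>B\<in>cls r g ` Fx r g. \<forall>i\<in>B. \<forall>j\<in>B. i < j \<longrightarrow> is_desc r T j i"
    show "\<forall>v\<in>{2..r}. g v \<in> hook r T v"
    proof
      fix v assume v: "v \<in> {2..r}"
      then have v1: "v \<in> {1..r}" by auto
      show "g v \<in> hook r T v"
      proof (cases "g v = v")
        case True then show ?thesis unfolding hook_def by auto
      next
        case False
        then have gv: "g v > v" "g v \<in> {1..r}" using gin[OF gd v1] by auto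
        have "rt r g v \<in> Fx r g" using rt_in[OF gd v1] rt_fix[OF gd v1] v v1 by (simp add: Fx_iff)
        moreover have "v \<in> cls r g (rt r g v)" "g v \<in> cls r g (rt r g v)"
          using v1 gv rt_g[OF gd v1] unfolding cls_def by auto
        ultimately have "is_desc r T (g v) v" using H gv by blast
        then show ?thesis using gv unfolding hook_def by auto
      qed
    qed
  next
    assume H: "\<forall>v\<in>{2..r}. g v \<in> hook r T v"
    define anc where "anc i w \<longleftrightarrow> w = i \<or> is_desc r T w i" for i w
    have step: "anc v (g v)" if "v \<in> {1..r}" for v
    proof (cases "v = 1")
      case True then show ?thesis using g1 unfolding anc_def by auto
    next
      case False then have "v \<in> {2..r}" using that by auto
      then show ?thesis using H unfolding hook_def anc_def by auto
    qed
    have it: "anc i ((g^^n) i)" if i: "i \<in> {1..r}" for i n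
    proof (induction n)
      case 0 then show ?case unfolding anc_def by auto
    next
      case (Suc n)
      have w: "(g^^n) i \<in> {1..r}" using iter_in[OF gd i, of n] i by auto
      from step[OF w] Suc show ?case unfolding anc_def
        using desc_trans[OF Ti] by auto
    qed
    show "\<forall>B\<in>cls r g ` Fx r g. \<forall>i\<in>B. \<forall>j\<in>B. i < j \<longrightarrow> is_desc r T j i"
    proof (intro ballI impI)
      fix B i j assume B: "B \<in> cls r g ` Fx r g" and i: "i \<in> B" and j: "j \<in> B" and ij: "i < j"
      obtain m where m: "B = cls r g m" using B by auto
      have i1: "i \<in> {1..r}" "rt r g i = m" using i m unfolding cls_def by auto
      have j1: "j \<in> {1..r}" "rt r g j = m" using j m unfolding cls_def by auto
      have ai: "anc i m" using it[OF i1(1), of r] i1 unfolding rt_def by auto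
      have aj: "anc j m" using it[OF j1(1), of r] j1 unfolding rt_def by auto
      have "j \<le> m" using rt_in[OF gd j1(1)] j1 by auto
      then have "is_desc r T m i" using ai ij unfolding anc_def by auto
      from chain[OF Ti this _ ij] aj show "is_desc r T j i" unfolding anc_def by auto
    qed
  qed
  finally show ?thesis by simp
qed




lemma fin_dom: "finite (dom_funs r)"
  by (simp add: dom_funs_def finite_PiE)

lemma fin_Pi1: "finite (Pi1 r)"
proof -
  have "Pi1 r \<subseteq> Pow (Pow {1..r})"
    unfolding Pi1_def partition_on_def by blast
  then show ?thesis by (rule finite_subset) simp
qed

lemma fin_incr: "finite (incr_trees r)"
  by (simp add: incr_trees_def finite_PiE)

lemma sum_Pi1:
  fixes F :: "nat set set \<Rightarrow> 'a::comm_ring_1"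
  assumes r1: "r \<ge> 1"
  shows "(\<Sum>P\<in>Pi1 r. Dsum r y P * F P) =
         (\<Sum>g\<in>{g\<in>dom_funs r. g 1 = 1}. wt r y g * F (induced_partition r g))"
proof -
  let ?G = "{g\<in>dom_funs r. induced_partition r g \<in> Pi1 r}"
  have "(\<Sum>P\<in>Pi1 r. Dsum r y P * F P) =
        (\<Sum>P\<in>Pi1 r. \<Sum>g\<in>{g\<in>?G. induced_partition r g = P}. wt r y g * F (induced_partition r g))"
  proof (rule sum.cong[OF refl])
    fix P assume P: "P \<in> Pi1 r"
    have e: "{g\<in>?G. induced_partition r g = P} = {g \<in> dom_funs r. induced_partition r g = P}"
      using P by (intro Collect_cong) auto
    have "Dsum r y P * F P = (\<Sum>g\<in>{g \<in> dom_funs r. induced_partition r g = P}. wt r y g * F P)"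
      unfolding Dsum_def by (rule sum_distrib_right)
    also have "\<dots> = (\<Sum>g\<in>{g \<in> dom_funs r. induced_partition r g = P}. wt r y g * F (induced_partition r g))"
      by (rule sum.cong[OF refl]) simp
    finally show "Dsum r y P * F P =
      (\<Sum>g\<in>{g\<in>?G. induced_partition r g = P}. wt r y g * F (induced_partition r g))"
      unfolding e .
  qed
  also have "\<dots> = (\<Sum>g\<in>?G. wt r y g * F (induced_partition r g))"
  proof (rule sum.group)
    show "finite ?G" using fin_dom[of r] by (rule finite_subset[rotated]) blast
    show "finite (Pi1 r)" by (rule fin_Pi1)
    show "induced_partition r ` ?G \<subseteq> Pi1 r" by blast
  qed
  also have "?G = {g\<in>dom_funs r. g 1 = 1}"
  proof (rule Collect_cong)
    fix g show "(g \<in> dom_funs r \<and> induced_partition r g \<in> Pi1 r) = (g \<in> dom_funs r \<and> g 1 = 1)"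
      using ip_Pi1[of g r, OF _ r1] by (cases "g \<in> dom_funs r") simp_all
  qed
  finally show ?thesis .
qed




definition HT :: "nat \<Rightarrow> (nat \<Rightarrow> nat) \<Rightarrow> nat \<Rightarrow> nat set" where
  "HT r T v = (if v = 1 then {1} else hook r T v)"

lemma hook_fin: "finite (hook r T v)"
  unfolding hook_def by simp

lemma HT_fin: "finite (HT r T v)"
  unfolding HT_def using hook_fin by simp

lemma step1:
  assumes Ti: "T \<in> incr_trees r" and r1: "r \<ge> 1"
  shows "y 1 1 * (\<Prod>v\<in>{2..r}. x (T v) * (\<Sum>u\<in>hook r T v. y v u)) =
         kappa r x T * (\<Sum>g\<in>Pi\<^sub>E {1..r} (HT r T). wt r y g)"
proof -
  have "(\<Prod>v\<in>{2..r}. x (T v) * (\<Sum>u\<in>hook r T v. y v u)) =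
        (\<Prod>v\<in>{2..r}. x (T v)) * (\<Prod>v\<in>{2..r}. \<Sum>u\<in>hook r T v. y v u)"
    by (rule prod.distrib)
  also have "(\<Prod>v\<in>{2..r}. x (T v)) = kappa r x T" by (rule kappa_eq[OF Ti])
  finally have e1: "(\<Prod>v\<in>{2..r}. x (T v) * (\<Sum>u\<in>hook r T v. y v u)) =
        kappa r x T * (\<Prod>v\<in>{2..r}. \<Sum>u\<in>hook r T v. y v u)" .
  have s: "{1..r} = insert 1 {2..r}" using r1 by auto
  have "(\<Prod>v\<in>{1..r}. \<Sum>u\<in>HT r T v. y v u) = (\<Sum>u\<in>HT r T 1. y 1 u) * (\<Prod>v\<in>{2..r}. \<Sum>u\<in>HT r T v. y v u)"
    unfolding s by (rule prod.insert) auto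
  also have "(\<Sum>u\<in>HT r T 1. y 1 u) = y 1 1" unfolding HT_def by simp
  also have "(\<Prod>v\<in>{2..r}. \<Sum>u\<in>HT r T v. y v u) = (\<Prod>v\<in>{2..r}. \<Sum>u\<in>hook r T v. y v u)"
    by (rule prod.cong[OF refl]) (simp add: HT_def)
  finally have e2: "(\<Prod>v\<in>{1..r}. \<Sum>u\<in>HT r T v. y v u) = y 1 1 * (\<Prod>v\<in>{2..r}. \<Sum>u\<in>hook r T v. y v u)" .
  have e3: "(\<Prod>v\<in>{1..r}. \<Sum>u\<in>HT r T v. y v u) = (\<Sum>g\<in>Pi\<^sub>E {1..r} (HT r T). \<Prod>v\<in>{1..r}. y v (g v))"
    by (rule prod_sum_PiE) (auto simp: HT_fin)
  show ?thesis
    unfolding e1 wt_def using e2 e3 by (simp add: ac_simps)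
qed

lemma mem_PiE_HT:
  assumes gd: "g \<in> dom_funs r" and g1: "g 1 = 1" and r1: "r \<ge> 1"
  shows "g \<in> Pi\<^sub>E {1..r} (HT r T) \<longleftrightarrow> (\<forall>v\<in>{2..r}. g v \<in> hook r T v)"
proof -
  have ext: "g \<in> extensional {1..r}" using gd unfolding dom_funs_def by (simp add: PiE_iff)
  have "g \<in> Pi\<^sub>E {1..r} (HT r T) \<longleftrightarrow> (\<forall>v\<in>{1..r}. g v \<in> HT r T v)"
    using ext by (simp add: PiE_iff)
  also have "\<dots> \<longleftrightarrow> (\<forall>v\<in>{2..r}. g v \<in> hook r T v)"
  proof
    assume h: "\<forall>v\<in>{1..r}. g v \<in> HT r T v"
    show "\<forall>v\<in>{2..r}. g v \<in> hook r T v"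
    proof
      fix v assume v: "v \<in> {2..r}"
      then have "g v \<in> HT r T v" using h by auto
      then show "g v \<in> hook r T v" using v unfolding HT_def by auto
    qed
  next
    assume h: "\<forall>v\<in>{2..r}. g v \<in> hook r T v"
    show "\<forall>v\<in>{1..r}. g v \<in> HT r T v"
    proof
      fix v assume v: "v \<in> {1..r}"
      show "g v \<in> HT r T v"
      proof (cases "v = 1")
        case True then show ?thesis using g1 unfolding HT_def by simp
      next
        case False then have "v \<in> {2..r}" using v by auto
        then show ?thesis using h False unfolding HT_def by simp
      qed
    qed
  qed
  finally show ?thesis .
qed

lemma PiE_HT_sub:
  assumes Ti: "T \<in> incr_trees r" and r1: "r \<ge> 1"
  shows "Pi\<^sub>E {1..r} (HT r T) \<subseteq> {g\<in>dom_funs r. g 1 = 1}"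
proof
  fix g assume g: "g \<in> Pi\<^sub>E {1..r} (HT r T)"
  have "Pi\<^sub>E {1..r} (HT r T) \<subseteq> Pi\<^sub>E {1..r} (\<lambda>i. {i..r})"
  proof (rule PiE_mono)
    fix v assume v: "v \<in> {1..r}"
    show "HT r T v \<subseteq> {v..r}"
    proof (cases "v = 1")
      case True then show ?thesis using r1 unfolding HT_def by auto
    next
      case False then have "v \<in> {2..r}" using v by auto
      then show ?thesis using hook_sub[OF Ti] False unfolding HT_def by auto
    qed
  qed
  then have "g \<in> dom_funs r" using g unfolding dom_funs_def by auto
  moreover have "g 1 = 1"
  proof -
    have "1 \<in> {1..r}" using r1 by simp
    from PiE_mem[OF g this] show ?thesis unfolding HT_def by simp
  qed
  ultimately show "g \<in> {g\<in>dom_funs r. g 1 = 1}" by simp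
qed

theorem part_a:
  fixes x :: "nat \<Rightarrow> 'a::comm_ring_1"
  assumes r1: "r \<ge> 1"
  shows "y 1 1 * Lpoly r x y = (\<Sum>P\<in>Pi1 r. Dsum r y P * (\<Sum>T\<in>Etrees r P. kappa r x T))"
proof -
  let ?G = "{g\<in>dom_funs r. g 1 = 1}"
  have finG: "finite ?G" using fin_dom[of r] by (rule finite_subset[rotated]) blast
  have "(\<Sum>P\<in>Pi1 r. Dsum r y P * (\<Sum>T\<in>Etrees r P. kappa r x T)) =
        (\<Sum>g\<in>?G. wt r y g * (\<Sum>T\<in>Etrees r (induced_partition r g). kappa r x T))"
    by (rule sum_Pi1[OF r1])
  also have "\<dots> = (\<Sum>g\<in>?G. \<Sum>T\<in>incr_trees r.
        (if g \<in> Pi\<^sub>E {1..r} (HT r T) then wt r y g * kappa r x T else 0))"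
  proof (rule sum.cong[OF refl])
    fix g assume g: "g \<in> ?G"
    have "Etrees r (induced_partition r g) = {T\<in>incr_trees r. g \<in> Pi\<^sub>E {1..r} (HT r T)}"
    proof (intro equalityI subsetI)
      fix T assume T: "T \<in> Etrees r (induced_partition r g)"
      then have Ti: "T \<in> incr_trees r" unfolding Etrees_def by simp
      show "T \<in> {T\<in>incr_trees r. g \<in> Pi\<^sub>E {1..r} (HT r T)}"
        using T Ti E_iff[of g r T] mem_PiE_HT[of g r T] g r1 by simp
    next
      fix T assume T: "T \<in> {T\<in>incr_trees r. g \<in> Pi\<^sub>E {1..r} (HT r T)}"
      then have Ti: "T \<in> incr_trees r" by simp
      show "T \<in> Etrees r (induced_partition r g)"
        using T Ti E_iff[of g r T] mem_PiE_HT[of g r T] g r1 by simp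
    qed
    then have "wt r y g * (\<Sum>T\<in>Etrees r (induced_partition r g). kappa r x T) =
          (\<Sum>T\<in>{T\<in>incr_trees r. g \<in> Pi\<^sub>E {1..r} (HT r T)}. wt r y g * kappa r x T)"
      by (simp add: sum_distrib_left)
    also have "\<dots> = (\<Sum>T\<in>incr_trees r. if g \<in> Pi\<^sub>E {1..r} (HT r T) then wt r y g * kappa r x T else 0)"
      by (rule sum.inter_filter[OF fin_incr])
    finally show "wt r y g * (\<Sum>T\<in>Etrees r (induced_partition r g). kappa r x T) =
          (\<Sum>T\<in>incr_trees r. if g \<in> Pi\<^sub>E {1..r} (HT r T) then wt r y g * kappa r x T else 0)" .
  qed
  also have "\<dots> = (\<Sum>T\<in>incr_trees r. \<Sum>g\<in>?G.
        (if g \<in> Pi\<^sub>E {1..r} (HT r T) then wt r y g * kappa r x T else 0))"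
    by (rule sum.swap)
  also have "\<dots> = (\<Sum>T\<in>incr_trees r. kappa r x T * (\<Sum>g\<in>Pi\<^sub>E {1..r} (HT r T). wt r y g))"
  proof (rule sum.cong[OF refl])
    fix T assume Ti: "T \<in> incr_trees r"
    have "(\<Sum>g\<in>?G. (if g \<in> Pi\<^sub>E {1..r} (HT r T) then wt r y g * kappa r x T else 0)) =
          (\<Sum>g\<in>{g\<in>?G. g \<in> Pi\<^sub>E {1..r} (HT r T)}. wt r y g * kappa r x T)"
      by (rule sum.inter_filter[OF finG, symmetric])
    also have "{g\<in>?G. g \<in> Pi\<^sub>E {1..r} (HT r T)} = Pi\<^sub>E {1..r} (HT r T)"
      using PiE_HT_sub[OF Ti r1] by blast
    finally show "(\<Sum>g\<in>?G. (if g \<in> Pi\<^sub>E {1..r} (HT r T) then wt r y g * kappa r x T else 0)) =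
          kappa r x T * (\<Sum>g\<in>Pi\<^sub>E {1..r} (HT r T). wt r y g)"
      by (simp add: sum_distrib_left sum_distrib_right ac_simps)
  qed
  also have "\<dots> = (\<Sum>T\<in>incr_trees r. y 1 1 * (\<Prod>v\<in>{2..r}. x (T v) * (\<Sum>u\<in>hook r T v. y v u)))"
    by (rule sum.cong[OF refl]) (rule step1[symmetric], assumption, rule r1)
  also have "\<dots> = y 1 1 * Lpoly r x y"
    unfolding Lpoly_def by (rule sum_distrib_left[symmetric])
  finally show ?thesis ..
qed




lemma omega_sum:
  fixes x :: "nat \<Rightarrow> 'a::comm_ring_1"
  assumes gd: "g \<in> dom_funs r" and g1: "g 1 = 1" and r2: "r \<ge> 2"
  shows "(\<Sum>c\<in>Clists (induced_partition r g). omega r x c (induced_partition r g)) =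
         x 1 * (\<Prod>i\<in>{2..r-1}. if g i = i then (\<Sum>j\<in>{1..i}. x j) else x i)"
proof -
  define M where "M = Fx r g"
  define P where "P = induced_partition r g"
  define L where "L = sorted_list_of_set M"
  define k where "k = card M"
  have PM: "P = cls r g ` M" unfolding P_def M_def by (rule ip_eq[OF gd])
  have Msub: "M \<subseteq> {1..r}" unfolding M_def Fx_def by auto
  have finM: "finite M" using Msub finite_subset by blast
  have M1: "1 \<in> M" using g1 r2 unfolding M_def Fx_def by auto
  have Mr: "r \<in> M"
  proof -
    have "r \<in> {1..r}" using r2 by simp
    from gin[OF gd this] have "g r = r" by simp
    then show ?thesis using r2 unfolding M_def Fx_def by auto
  qed
  have hMax: "Max ` P = M"
  proof -
    have "Max ` P = (\<lambda>m. Max (cls r g m)) ` M" unfolding PM by (rule image_image)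
    also have "\<dots> = (\<lambda>m. m) ` M"
      by (rule image_cong[OF refl]) (rule cls_Max[OF gd], simp add: M_def)
    finally show ?thesis by simp
  qed
  have hcard: "card P = k" unfolding PM k_def
    by (rule card_image) (simp add: cls_inj[OF gd] M_def)
  have setL: "set L = M" unfolding L_def using finM by simp
  have distL: "distinct L" unfolding L_def by simp
  have lenL: "length L = k" unfolding L_def k_def by simp
  have strL: "sorted_wrt (<) L" unfolding L_def by (rule strict_sorted_list_of_set)
  have mu_eq: "mu P i = L ! (i - 1)" for i unfolding mu_def hMax L_def ..
  have k2: "k \<ge> 2"
  proof -
    have "{1, r} \<subseteq> M" using M1 Mr by auto
    then have "card {1, r} \<le> k" unfolding k_def by (rule card_mono[OF finM])
    then show ?thesis using r2 by simp
  qed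
  have Lge: "L ! j \<in> M" if "j < k" for j using that setL lenL nth_mem by blast
  have L0: "L ! 0 = 1"
  proof -
    obtain j where j: "j < k" "L ! j = 1" using M1 setL lenL by (metis in_set_conv_nth)
    show ?thesis
    proof (cases "j = 0")
      case True then show ?thesis using j by simp
    next
      case False
      then have "L ! 0 < L ! j" using sorted_wrt_nth_less[OF strL, of 0 j] j lenL by simp
      moreover have "L ! 0 \<ge> 1" using Lge[of 0] k2 Msub by auto
      ultimately show ?thesis using j by simp
    qed
  qed
  have Lk: "L ! (k - 1) = r"
  proof -
    obtain j where j: "j < k" "L ! j = r" using Mr setL lenL by (metis in_set_conv_nth)
    show ?thesis
    proof (cases "j = k - 1")
      case True then show ?thesis using j by simp
    next
      case False
      then have "L ! j < L ! (k - 1)" using sorted_wrt_nth_less[OF strL, of j "k - 1"] j lenL by simp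
      moreover have "L ! (k - 1) \<le> r" using Lge[of "k - 1"] k2 Msub by auto
      ultimately show ?thesis using j by simp
    qed
  qed
  have I1: "mu P ` {2..k} = M - {1}"
  proof (intro equalityI subsetI)
    fix m assume "m \<in> mu P ` {2..k}"
    then obtain i where i: "i \<in> {2..k}" "m = L ! (i - 1)" unfolding mu_eq by auto
    have ii: "0 < i - 1" "i - 1 < length L" using i lenL by auto
    have "L ! 0 < L ! (i - 1)" by (rule sorted_wrt_nth_less[OF strL ii])
    then show "m \<in> M - {1}" using i Lge[of "i - 1"] L0 by auto
  next
    fix m assume m: "m \<in> M - {1}"
    obtain j where j: "j < k" "L ! j = m" using m setL lenL by (metis DiffD1 in_set_conv_nth)
    have "j \<noteq> 0"
    proof
      assume "j = 0" then have "m = 1" using j L0 by simp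
      with m show False by simp
    qed
    then have "Suc j \<in> {2..k}" "m = mu P (Suc j)" using j by (auto simp: mu_eq)
    then show "m \<in> mu P ` {2..k}" by blast
  qed
  have I2: "mu P ` {2..k-1} = M - {1, r}"
  proof (intro equalityI subsetI)
    fix m assume "m \<in> mu P ` {2..k-1}"
    then obtain i where i: "i \<in> {2..k-1}" "m = L ! (i - 1)" unfolding mu_eq by auto
    have ii: "0 < i - 1" "i - 1 < length L" using i lenL by auto
    have "L ! 0 < L ! (i - 1)" by (rule sorted_wrt_nth_less[OF strL ii])
    moreover have ii2: "i - 1 < k - 1" "k - 1 < length L" using i lenL k2 by auto
    moreover have "L ! (i - 1) < L ! (k - 1)" by (rule sorted_wrt_nth_less[OF strL ii2])
    ultimately show "m \<in> M - {1, r}" using i Lge[of "i - 1"] L0 Lk by auto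
  next
    fix m assume m: "m \<in> M - {1, r}"
    obtain j where j: "j < k" "L ! j = m" using m setL lenL by (metis DiffD1 in_set_conv_nth)
    have "j \<noteq> 0"
    proof
      assume "j = 0" then have "m = 1" using j L0 by simp
      with m show False by simp
    qed
    moreover have "j \<noteq> k - 1"
    proof
      assume "j = k - 1" then have "m = r" using j Lk by simp
      with m show False by simp
    qed
    ultimately have "Suc j \<in> {2..k-1}" "m = mu P (Suc j)" using j by (auto simp: mu_eq)
    then show "m \<in> mu P ` {2..k-1}" by blast
  qed
  have inj: "inj_on (mu P) {2..k-1}"
  proof (rule inj_onI)
    fix a b assume ab: "a \<in> {2..k-1}" "b \<in> {2..k-1}" "mu P a = mu P b"
    then have "L ! (a - 1) = L ! (b - 1)" by (simp add: mu_eq)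
    then have "a - 1 = b - 1" using nth_eq_iff_index_eq[OF distL] ab lenL by auto
    then show "a = b" using ab by auto
  qed
  define S where "S i = (\<Sum>j\<in>{1..i}. x j)" for i
  define Q where "Q = (\<Prod>i\<in>{1..r} - (M - {1}). x i)"
  have "(\<Sum>c\<in>Clists P. omega r x c P) = (\<Sum>c\<in>Pi\<^sub>E {2..k-1} (\<lambda>i. {1..mu P i}). (\<Prod>i\<in>{2..k-1}. x (c i)) * Q)"
    unfolding Clists_def omega_def hcard Q_def I1 ..
  also have "\<dots> = (\<Sum>c\<in>Pi\<^sub>E {2..k-1} (\<lambda>i. {1..mu P i}). \<Prod>i\<in>{2..k-1}. x (c i)) * Q"
    by (rule sum_distrib_right[symmetric])
  also have "(\<Sum>c\<in>Pi\<^sub>E {2..k-1} (\<lambda>i. {1..mu P i}). \<Prod>i\<in>{2..k-1}. x (c i)) =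
             (\<Prod>i\<in>{2..k-1}. \<Sum>u\<in>{1..mu P i}. x u)"
    by (rule prod_sum_PiE[symmetric]) auto
  also have "(\<Prod>i\<in>{2..k-1}. \<Sum>u\<in>{1..mu P i}. x u) = (\<Prod>i\<in>{2..k-1}. S (mu P i))"
    unfolding S_def ..
  also have "\<dots> = (\<Prod>m\<in>mu P ` {2..k-1}. S m)"
    by (rule prod.reindex[OF inj, symmetric, unfolded comp_def])
  also have "\<dots> = (\<Prod>m\<in>M - {1, r}. S m)" unfolding I2 ..
  finally have lhs: "(\<Sum>c\<in>Clists P. omega r x c P) = (\<Prod>m\<in>M - {1, r}. S m) * Q" .
  have "(\<Prod>i\<in>{2..r-1}. if g i = i then S i else x i) = (\<Prod>i\<in>{2..r-1}. if i \<in> M then S i else x i)"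
    by (rule prod.cong[OF refl]) (auto simp: M_def Fx_def)
  also have "\<dots> = (\<Prod>i\<in>{2..r-1} \<inter> {i. i \<in> M}. S i) * (\<Prod>i\<in>{2..r-1} \<inter> - {i. i \<in> M}. x i)"
    by (rule prod.If_cases) simp
  also have "{2..r-1} \<inter> {i. i \<in> M} = M - {1, r}" using Msub by (auto simp: subset_iff)
  finally have rhs1: "(\<Prod>i\<in>{2..r-1}. if g i = i then S i else x i) =
      (\<Prod>m\<in>M - {1, r}. S m) * (\<Prod>i\<in>{2..r-1} \<inter> - {i. i \<in> M}. x i)" .
  have "{1..r} - (M - {1}) = insert 1 ({2..r-1} \<inter> - {i. i \<in> M})" using Msub Mr r2 M1 apply (auto simp: subset_iff)
    subgoal for z by (cases "z = r") auto
    done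
  then have "Q = x 1 * (\<Prod>i\<in>{2..r-1} \<inter> - {i. i \<in> M}. x i)" unfolding Q_def
    by (simp add: prod.insert)
  with lhs rhs1 show ?thesis unfolding P_def[symmetric] S_def[symmetric] by (simp add: ac_simps)
qed




theorem part_b:
  fixes x :: "nat \<Rightarrow> 'a::comm_ring_1"
  assumes r2: "r \<ge> 2"
  shows "y 1 1 * Rpoly r x y = (\<Sum>P\<in>Pi1 r. Dsum r y P * (\<Sum>c\<in>Clists P. omega r x c P))"
proof -
  have r1: "r \<ge> 1" using r2 by simp
  let ?G = "{g\<in>dom_funs r. g 1 = 1}"
  define S where "S i = (\<Sum>j\<in>{1..i}. x j)" for i
  define H where "H i = (if i = 1 then {1} else {i..r})" for i :: nat
  define \<phi> where "\<phi> i u = y i u * (if i \<in> {2..r-1} then (if u = i then S i else x i) else 1)" for i u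
  have GH: "?G = Pi\<^sub>E {1..r} H"
  proof (intro equalityI subsetI)
    fix g assume g: "g \<in> ?G"
    then have "g \<in> Pi\<^sub>E {1..r} (\<lambda>i. {i..r})" "g 1 = 1" unfolding dom_funs_def by auto
    then show "g \<in> Pi\<^sub>E {1..r} H" unfolding H_def by (auto simp: PiE_iff)
  next
    fix g assume g: "g \<in> Pi\<^sub>E {1..r} H"
    have "1 \<in> {1..r}" using r1 by simp
    from PiE_mem[OF g this] have g1: "g 1 = 1" unfolding H_def by simp
    have "Pi\<^sub>E {1..r} H \<subseteq> Pi\<^sub>E {1..r} (\<lambda>i. {i..r})"
      by (rule PiE_mono) (auto simp: H_def)
    with g g1 show "g \<in> ?G" unfolding dom_funs_def by auto
  qed
  have "(\<Sum>P\<in>Pi1 r. Dsum r y P * (\<Sum>c\<in>Clists P. omega r x c P)) =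
        (\<Sum>g\<in>?G. wt r y g * (\<Sum>c\<in>Clists (induced_partition r g). omega r x c (induced_partition r g)))"
    by (rule sum_Pi1[OF r1])
  also have "\<dots> = (\<Sum>g\<in>?G. x 1 * (\<Prod>i\<in>{1..r}. \<phi> i (g i)))"
  proof (rule sum.cong[OF refl])
    fix g assume g: "g \<in> ?G"
    have "(\<Prod>i\<in>{1..r}. \<phi> i (g i)) = wt r y g * (\<Prod>i\<in>{1..r}.
            (if i \<in> {2..r-1} then (if g i = i then S i else x i) else 1))"
      unfolding \<phi>_def wt_def by (rule prod.distrib)
    also have "(\<Prod>i\<in>{1..r}. (if i \<in> {2..r-1} then (if g i = i then S i else x i) else 1)) =
               (\<Prod>i\<in>{i\<in>{1..r}. i \<in> {2..r-1}}. (if g i = i then S i else x i))"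
      by (rule prod.inter_filter[symmetric]) simp
    also have "{i\<in>{1..r}. i \<in> {2..r-1}} = {2..r-1}" by auto
    finally have "(\<Prod>i\<in>{1..r}. \<phi> i (g i)) = wt r y g * (\<Prod>i\<in>{2..r-1}. (if g i = i then S i else x i))" .
    then show "wt r y g * (\<Sum>c\<in>Clists (induced_partition r g). omega r x c (induced_partition r g)) =
          x 1 * (\<Prod>i\<in>{1..r}. \<phi> i (g i))"
      using omega_sum[of g r x, OF _ _ r2] g unfolding S_def by (simp add: ac_simps)
  qed
  also have "\<dots> = x 1 * (\<Sum>g\<in>Pi\<^sub>E {1..r} H. \<Prod>i\<in>{1..r}. \<phi> i (g i))"
    unfolding GH by (rule sum_distrib_left[symmetric])
  also have "(\<Sum>g\<in>Pi\<^sub>E {1..r} H. \<Prod>i\<in>{1..r}. \<phi> i (g i)) = (\<Prod>i\<in>{1..r}. \<Sum>u\<in>H i. \<phi> i u)"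
    by (rule prod_sum_PiE[symmetric]) (auto simp: H_def)
  also have "\<dots> = y 1 1 * (y r r * (\<Prod>i\<in>{2..r-1}. \<Sum>u\<in>{i..r}. \<phi> i u))"
  proof -
    have s: "{1..r} = insert 1 (insert r {2..r-1})" using r2 by auto
    have "(\<Prod>i\<in>{1..r}. \<Sum>u\<in>H i. \<phi> i u) =
          (\<Sum>u\<in>H 1. \<phi> 1 u) * ((\<Sum>u\<in>H r. \<phi> r u) * (\<Prod>i\<in>{2..r-1}. \<Sum>u\<in>H i. \<phi> i u))"
      unfolding s using r2 by (simp add: prod.insert)
    also have "(\<Sum>u\<in>H 1. \<phi> 1 u) = y 1 1" unfolding H_def \<phi>_def by simp
    also have "(\<Sum>u\<in>H r. \<phi> r u) = y r r"
    proof -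
      have hr: "H r = {r}" using r2 unfolding H_def by auto
      have nr: "r \<notin> {2..r-1}" using r2 by auto
      have "(\<Sum>u\<in>H r. \<phi> r u) = \<phi> r r" unfolding hr by simp
      also have "\<dots> = y r r" unfolding \<phi>_def if_not_P[OF nr] by simp
      finally show ?thesis .
    qed
    also have "(\<Prod>i\<in>{2..r-1}. \<Sum>u\<in>H i. \<phi> i u) = (\<Prod>i\<in>{2..r-1}. \<Sum>u\<in>{i..r}. \<phi> i u)"
      by (rule prod.cong[OF refl]) (simp add: H_def)
    finally show ?thesis .
  qed
  also have "(\<Prod>i\<in>{2..r-1}. \<Sum>u\<in>{i..r}. \<phi> i u) =
     (\<Prod>i\<in>{2..r-1}. (\<Sum>j\<in>{1..i}. x j * y i i) + (\<Sum>j\<in>{i+1..r}. x i * y i j))"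
  proof (rule prod.cong[OF refl])
    fix i assume i: "i \<in> {2..r-1}"
    have s: "{i..r} = insert i {i+1..r}" using i by auto
    have "(\<Sum>u\<in>{i..r}. \<phi> i u) = \<phi> i i + (\<Sum>u\<in>{i+1..r}. \<phi> i u)"
      unfolding s by (rule sum.insert) auto
    also have "\<phi> i i = (\<Sum>j\<in>{1..i}. x j * y i i)"
      unfolding \<phi>_def S_def using i by (simp add: sum_distrib_right sum_distrib_left ac_simps)
    also have "(\<Sum>u\<in>{i+1..r}. \<phi> i u) = (\<Sum>j\<in>{i+1..r}. x i * y i j)"
      by (rule sum.cong[OF refl]) (use i in \<open>auto simp: \<phi>_def ac_simps\<close>)
    finally show "(\<Sum>u\<in>{i..r}. \<phi> i u) = (\<Sum>j\<in>{1..i}. x j * y i i) + (\<Sum>j\<in>{i+1..r}. x i * y i j)" .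
  qed
  finally show ?thesis unfolding Rpoly_def by (simp add: ac_simps)
qed

theorem proposition2p1:
  fixes r :: nat and x :: "nat \<Rightarrow> 'a::comm_ring_1" and y :: "nat \<Rightarrow> nat \<Rightarrow> 'a"
  assumes "r \<ge> 2"
  shows "y 1 1 * Lpoly r x y = (\<Sum>P\<in>Pi1 r. Dsum r y P * (\<Sum>T\<in>Etrees r P. kappa r x T))
       \<and> y 1 1 * Rpoly r x y = (\<Sum>P\<in>Pi1 r. Dsum r y P * (\<Sum>c\<in>Clists P. omega r x c P))"
  using part_a[of r y x] part_b[of r y x] assms by simp


end
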